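(* Let $a(n,k)$ be the number of non-squashing partitions of $n$ into exactly $k$ parts. Then $a(0,0)=1$, $a(n,0)=0$ for $n\ge1$, $a(n,k)=0$ for $k>n$, $a(n,1)=1$ for $n\ge1$, and for $m\ge1,k\ge1$: $$a(2m,k)=a(2m-1,k)+a(m,k-1),\qquad a(2m+1,k)=a(2m,k).$$ For every $k\ge1$, $$\sum_{m\ge0}a(m,k)x^m=\frac{x^{2^{k-1}}}{\prod_{j=0}^{k-1}\left(1-x^{2^j}\right)},$$ and for every $k\ge2$, $$\sum_{m\ge0}a(2m,k)x^m=\frac{x^{2^{k-2}}}{(1-x)\prod_{j=0}^{k-2}\left(1-x^{2^j}\right)}.$$ Consequently, for $k\ge1$, $a(n,k)$ equals the number of partitions of $n-2^{k-1}$ into powers of $2$ not exceeding $2^{k-1}$, and also equals the number of partitions of $n$ into powers of $2$ whose largest part is $2^{k-1}$.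
   Context: A partition $n=p_1+\cdots+p_k$ with $1\le p_1\le\cdots\le p_k$ is non-squashing if $p_1+\cdots+p_j\le p_{j+1}$ for all $1\le j\le k-1$. The empty partition is the unique partition of $0$ and has $0$ parts. *)

theory Defs
  imports "HOL-Computational_Algebra.Formal_Power_Series"
begin

text \<open>A partition is represented as a nondecreasing list of positive parts
  p_1 <= ... <= p_k. It is non-squashing if p_1+...+p_j <= p_(j+1) for 1 <= j <= k-1
  (list indices are 0-based, so p_(j+1) is ps ! j and p_1+...+p_j is sum_list (take j ps)).\<close>

definition non_squashing :: "nat list \<Rightarrow> bool" where
  "non_squashing ps \<longleftrightarrow>
     (\<forall>p\<in>set ps. 1 \<le> p) \<and> sorted ps \<and>
     (\<forall>j. 1 \<le> j \<and> j < length ps \<longrightarrow> sum_list (take j ps) \<le> ps ! j)"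

definition nsq :: "nat \<Rightarrow> nat \<Rightarrow> nat" where
  "nsq n k = card {ps. non_squashing ps \<and> sum_list ps = n \<and> length ps = k}"

definition partitions_with :: "(nat \<Rightarrow> bool) \<Rightarrow> nat \<Rightarrow> nat list set" where
  "partitions_with P n = {ps. sorted ps \<and> (\<forall>p\<in>set ps. 1 \<le> p \<and> P p) \<and> sum_list ps = n}"

end

theory Submission
  imports Defs
begin


abbreviation NS where "NS n k \<equiv> {ps. non_squashing ps \<and> sum_list ps = n \<and> length ps = k}"

lemma ns_Nil[simp]: "non_squashing []" by (simp add: non_squashing_def)

lemma ns_snoc: "non_squashing (qs @ [x]) \<longleftrightarrow> non_squashing qs \<and> 1 \<le> x \<and> sum_list qs \<le> x"
proof
  assume H: "non_squashing (qs @ [x])"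
  have a: "\<forall>p\<in>set qs. 1 \<le> p" "1 \<le> x" "sorted qs" using H by (auto simp: non_squashing_def sorted_append)
  have b: "sum_list (take j qs) \<le> qs ! j" if "1 \<le> j" "j < length qs" for j
  proof -
    have "sum_list (take j (qs@[x])) \<le> (qs@[x]) ! j" using H that by (auto simp: non_squashing_def)
    then show ?thesis using that by (simp add: nth_append)
  qed
  have c: "sum_list qs \<le> x"
  proof (cases "qs = []")
    case True then show ?thesis by simp
  next
    case False
    have "sum_list (take (length qs) (qs@[x])) \<le> (qs@[x]) ! length qs"
      using H False unfolding non_squashing_def by (metis One_nat_def length_append_singleton length_greater_0_conv lessI less_eq_Suc_le)
    then show ?thesis by simp
  qed
  show "non_squashing qs \<and> 1 \<le> x \<and> sum_list qs \<le> x" using a b c by (auto simp: non_squashing_def)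
next
  assume H: "non_squashing qs \<and> 1 \<le> x \<and> sum_list qs \<le> x"
  have le: "\<forall>q\<in>set qs. q \<le> x" using H member_le_sum_list order_trans by blast
  have "sum_list (take j (qs@[x])) \<le> (qs@[x]) ! j" if "1 \<le> j" "j < length (qs@[x])" for j
  proof (cases "j < length qs")
    case True then show ?thesis using H that by (simp add: non_squashing_def nth_append)
  next
    case False then have "j = length qs" using that by simp
    then show ?thesis using H by simp
  qed
  then show "non_squashing (qs @ [x])" using H le by (auto simp: non_squashing_def sorted_append)
qed

lemma length_le_sum: "\<forall>p\<in>set ps. 1 \<le> p \<Longrightarrow> length ps \<le> sum_list (ps::nat list)"
  by (induction ps) auto

lemma finite_bounded: "finite {ps::nat list. set ps \<subseteq> {..n} \<and> length ps \<le> n}"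
  using finite_lists_length_le[of "{..n}" n] by simp

lemma finite_NS: "finite (NS n k)"
proof (rule finite_subset[OF _ finite_bounded[of n]])
  show "NS n k \<subseteq> {ps. set ps \<subseteq> {..n} \<and> length ps \<le> n}"
  proof
    fix ps assume ps: "ps \<in> NS n k"
    then have "length ps \<le> n" using length_le_sum by (auto simp: non_squashing_def)
    moreover have "set ps \<subseteq> {..n}" using ps member_le_sum_list by fastforce
    ultimately show "ps \<in> {ps. set ps \<subseteq> {..n} \<and> length ps \<le> n}" by simp
  qed
qed

lemma finite_pw: "finite (partitions_with P n)"
proof (rule finite_subset[OF _ finite_bounded[of n]])
  show "partitions_with P n \<subseteq> {ps. set ps \<subseteq> {..n} \<and> length ps \<le> n}"
  proof
    fix ps assume ps: "ps \<in> partitions_with P n"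
    then have "length ps \<le> n" using length_le_sum by (auto simp: partitions_with_def)
    moreover have "set ps \<subseteq> {..n}" using ps member_le_sum_list by (fastforce simp: partitions_with_def)
    ultimately show "ps \<in> {ps. set ps \<subseteq> {..n} \<and> length ps \<le> n}" by simp
  qed
qed

lemma NS_Suc: assumes "n \<ge> 1"
  shows "NS n (Suc k) = (\<lambda>(s,qs). qs @ [n-s]) ` (SIGMA s:{..n div 2}. NS s k)"
proof
  show "NS n (Suc k) \<subseteq> (\<lambda>(s,qs). qs @ [n-s]) ` (SIGMA s:{..n div 2}. NS s k)"
  proof
    fix ps assume ps: "ps \<in> NS n (Suc k)"
    then have "ps \<noteq> []" by auto
    then obtain qs x where e: "ps = qs @ [x]" by (metis append_butlast_last_id)
    have h: "non_squashing qs" "1 \<le> x" "sum_list qs \<le> x" using ps e ns_snoc by auto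
    have hh: "sum_list qs + x = n" "length qs = k" using ps e by auto
    then have "sum_list qs \<le> n div 2" "x = n - sum_list qs" using h by auto
    then show "ps \<in> (\<lambda>(s,qs). qs @ [n-s]) ` (SIGMA s:{..n div 2}. NS s k)"
      using e h hh by (auto intro!: image_eqI[where x="(sum_list qs, qs)"])
  qed
next
  show "(\<lambda>(s,qs). qs @ [n-s]) ` (SIGMA s:{..n div 2}. NS s k) \<subseteq> NS n (Suc k)"
  proof
    fix ps assume "ps \<in> (\<lambda>(s,qs). qs @ [n-s]) ` (SIGMA s:{..n div 2}. NS s k)"
    then obtain s qs where "s \<le> n div 2" "qs \<in> NS s k" "ps = qs @ [n-s]" by auto
    then show "ps \<in> NS n (Suc k)" using assms by (auto simp: ns_snoc)
  qed
qed

lemma nsq_Suc: "nsq n (Suc k) = (if n = 0 then 0 else \<Sum>s\<le>n div 2. nsq s k)"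
proof (cases "n = 0")
  case True
  have "NS 0 (Suc k) = {}"
  proof -
    have False if "ps \<in> NS 0 (Suc k)" for ps
      using that length_le_sum[of ps] by (cases ps) (auto simp: non_squashing_def)
    then show ?thesis by blast
  qed
  then have "nsq 0 (Suc k) = 0" unfolding nsq_def by (metis card.empty)
  then show ?thesis using True by simp
next
  case False
  have inj: "inj_on (\<lambda>(s,qs). qs @ [n-s]) (SIGMA s:{..n div 2}. NS s k)"
    by (auto simp: inj_on_def)
  have "nsq n (Suc k) = card (SIGMA s:{..n div 2}. NS s k)"
    unfolding nsq_def using False NS_Suc[of n k] card_image[OF inj] by simp
  also have "\<dots> = (\<Sum>s\<le>n div 2. nsq s k)"
    by (simp add: card_SigmaI finite_NS nsq_def)
  finally show ?thesis using False by simp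
qed

lemma nsq0: "nsq n 0 = (if n = 0 then 1 else 0)"
proof -
  have "NS n 0 = (if n = 0 then {[]} else {})" by auto
  then show ?thesis by (simp add: nsq_def)
qed

lemma nsq1: "nsq n 1 = (if n = 0 then 0 else 1)"
  using nsq_Suc[of n 0] by (simp add: nsq0)

lemma nsq_big: "n < k \<Longrightarrow> nsq n k = 0"
proof (induction k arbitrary: n)
  case 0 then show ?case by simp
next
  case (Suc k)
  show ?case
  proof (cases "n = 0")
    case True then show ?thesis by (simp add: nsq_Suc)
  next
    case False
    have "nsq s k = 0" if "s \<le> n div 2" for s using Suc that False by simp
    then show ?thesis by (simp add: nsq_Suc)
  qed
qed

lemma item5: assumes "m \<ge> 1" "k \<ge> 1" shows "nsq (2*m) k = nsq (2*m - 1) k + nsq m (k - 1)"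
proof -
  obtain k' where k: "k = Suc k'" using assms by (cases k) auto
  obtain m' where m: "m = Suc m'" using assms by (cases m) auto
  have d: "(2*m - 1) div 2 = m'" using m by simp
  show ?thesis using m k d by (simp add: nsq_Suc)
qed

lemma item6: assumes "m \<ge> 1" "k \<ge> 1" shows "nsq (2*m + 1) k = nsq (2*m) k"
proof -
  obtain k' where k: "k = Suc k'" using assms by (cases k) auto
  show ?thesis using assms k by (simp add: nsq_Suc)
qed



lemma compose_X2_nth: "fps_nth ((f::real fps) oo fps_X^2) n = (if even n then fps_nth f (n div 2) else 0)"
proof -
  have "fps_nth (f oo fps_X^2) n = (\<Sum>i=0..n. fps_nth f i * (if n = 2*i then 1 else 0))"
    by (simp add: fps_compose_nth power_mult[symmetric])
  also have "\<dots> = (\<Sum>i=0..n. if i = n div 2 then (if even n then fps_nth f i else 0) else 0)"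
    by (rule sum.cong) auto
  also have "\<dots> = (if even n then fps_nth f (n div 2) else 0)" by simp
  finally show ?thesis .
qed

lemma X_pow_compose: "(fps_X ^ a :: real fps) oo fps_X^2 = fps_X^(2*a)"
  by (auto simp: fps_eq_iff compose_X2_nth)

lemma one_minus_compose: "(1 - fps_X^a :: real fps) oo fps_X^2 = 1 - fps_X^(2*a)"
  by (simp add: fps_compose_sub_distrib X_pow_compose)

definition FF :: "nat \<Rightarrow> real fps" where "FF k = Abs_fps (\<lambda>m. real (nsq m k))"
definition PP :: "nat \<Rightarrow> real fps" where "PP k = (\<Prod>j<k. (1 - fps_X ^ (2 ^ j)))"

lemma PP0: "fps_nth (PP k) 0 = 1"
proof (induction k)
  case 0 then show ?case by (simp add: PP_def)
next
  case (Suc k)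
  have "PP (Suc k) = PP k * (1 - fps_X ^ (2 ^ k))" by (simp add: PP_def)
  then show ?case using Suc by simp
qed

lemma PP_nz: "PP k \<noteq> 0" using PP0[of k] by auto

lemma FF_rec: "(1 - fps_X) * FF (Suc (Suc k)) = FF (Suc k) oo fps_X^2"
proof -
  have e: "(1 - fps_X) * FF (Suc (Suc k)) = FF (Suc (Suc k)) - fps_X * FF (Suc (Suc k))"
    by (simp add: algebra_simps)
  have H: "real (nsq n (Suc (Suc k))) - (if n = 0 then 0 else real (nsq (n - 1) (Suc (Suc k))))
      = (if even n then real (nsq (n div 2) (Suc k)) else 0)" for n
  proof -
    consider "n = 0" | "n = 1" | m where "m \<ge> 1" "n = 2*m" | m where "m \<ge> 1" "n = 2*m+1"
    proof (cases "n \<le> 1")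
      case True then have "n = 0 \<or> n = 1" by auto
      then show ?thesis using that(1,2) by blast
    next
      case False
      show ?thesis
      proof (cases "even n")
        case True then obtain m where m: "n = 2*m" by blast
        then have "m \<ge> 1" using False by simp
        then show ?thesis using that(3) m by blast
      next
        case F: False then obtain m where m: "n = 2*m+1" using oddE by blast
        then have "m \<ge> 1" using False by simp
        then show ?thesis using that(4) m by blast
      qed
    qed
    then show ?thesis
    proof cases
      case 1 then show ?thesis by (simp add: nsq_Suc)
    next
      case 2 then show ?thesis by (simp add: nsq_Suc)
    next
      case (3 m) then show ?thesis using item5[of m "Suc (Suc k)"] by simp
    next
      case (4 m) then show ?thesis using item6[of m "Suc (Suc k)"] by simp
    qed
  qed
  show ?thesis unfolding e fps_eq_iff
  proof
    fix n show "fps_nth (FF (Suc (Suc k)) - fps_X * FF (Suc (Suc k))) n = fps_nth (FF (Suc k) oo fps_X\<^sup>2) n"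
      unfolding fps_sub_nth fps_X_mult_nth compose_X2_nth FF_def fps_nth_Abs_fps by (rule H)
  qed
qed

lemma nsq1': "nsq n (Suc 0) = (if n = 0 then 0 else 1)" using nsq1 by simp

lemma FF_PP: "FF (Suc k) * PP (Suc k) = fps_X ^ (2^k)"
proof (induction k)
  case 0
  have e: "FF 1 * PP 1 = FF 1 - fps_X * FF 1" by (simp add: PP_def algebra_simps)
  show ?case unfolding One_nat_def[symmetric] e
    by (auto simp: fps_eq_iff FF_def nsq1')
next
  case (Suc k)
  have c: "PP (Suc k) oo fps_X^2 = (\<Prod>j<Suc k. (1 - fps_X^(2^Suc j)))"
      proof -
    have "(\<Prod>j<Suc k. (1 - fps_X ^ 2 ^ j)) oo (fps_X^2::real fps) = (\<Prod>j<Suc k. (1 - fps_X ^ 2 ^ j) oo fps_X^2)"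
      by (rule fps_compose_prod_distrib) simp
    also have "\<dots> = (\<Prod>j<Suc k. (1 - fps_X^(2^Suc j)))"
      by (rule prod.cong) (simp_all add: one_minus_compose)
    finally show ?thesis unfolding PP_def .
  qed
  have PPS: "PP (Suc (Suc k)) = (1 - fps_X) * (PP (Suc k) oo fps_X^2)"
  proof -
    have "PP (Suc (Suc k)) = (1 - fps_X) * (\<Prod>j<Suc k. (1 - fps_X^(2^Suc j)))"
      unfolding PP_def by (subst prod.lessThan_Suc_shift) (simp del: prod.lessThan_Suc)
    then show ?thesis by (simp only: c)
  qed
  have "FF (Suc (Suc k)) * PP (Suc (Suc k)) = ((1 - fps_X) * FF (Suc (Suc k))) * (PP (Suc k) oo fps_X^2)"
    by (simp add: PPS mult_ac)
  also have "\<dots> = (FF (Suc k) oo fps_X^2) * (PP (Suc k) oo fps_X^2)" by (simp add: FF_rec)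
  also have "\<dots> = (FF (Suc k) * PP (Suc k)) oo fps_X^2" by (simp add: fps_compose_mult_distrib)
  also have "\<dots> = fps_X^(2^Suc k)" using Suc.IH by (simp add: X_pow_compose)
  finally show ?case .
qed

lemma item7: assumes "k \<ge> 1"
  shows "Abs_fps (\<lambda>m. real (nsq m k)) = fps_X ^ (2 ^ (k - 1)) / (\<Prod>j<k. (1 - fps_X ^ (2 ^ j)))"
proof -
  obtain k' where k: "k = Suc k'" using assms by (cases k) auto
  have "FF k * PP k = fps_X^(2^(k-1))" using FF_PP[of k'] k by simp
  then have "FF k = fps_X^(2^(k-1)) / PP k" using PP_nz by (metis nonzero_mult_div_cancel_right)
  then show ?thesis unfolding FF_def PP_def .
qed

definition EE :: "nat \<Rightarrow> real fps" where "EE k = Abs_fps (\<lambda>m. real (nsq (2*m) k))"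

lemma even_sum: "K \<ge> 1 \<Longrightarrow> nsq (2*n) (Suc K) = (\<Sum>s\<le>n. nsq s K)"
  by (cases "n = 0") (auto simp: nsq_Suc nsq_big)

lemma EE_rec: "(1 - fps_X) * EE (Suc (Suc k)) = FF (Suc k)"
proof -
  have e: "(1 - fps_X) * EE (Suc (Suc k)) = EE (Suc (Suc k)) - fps_X * EE (Suc (Suc k))"
    by (simp add: algebra_simps)
  have H: "real (nsq (2*n) (Suc (Suc k))) - (if n = 0 then 0 else real (nsq (2*(n - 1)) (Suc (Suc k))))
      = real (nsq n (Suc k))" for n
  proof (cases n)
    case 0 then show ?thesis by (simp add: nsq_Suc)
  next
    case (Suc n')
    have a: "nsq (2*n) (Suc (Suc k)) = (\<Sum>s\<le>n. nsq s (Suc k))" by (rule even_sum) simp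
    have b: "nsq (2*(n-1)) (Suc (Suc k)) = (\<Sum>s\<le>n-1. nsq s (Suc k))" by (rule even_sum) simp
    show ?thesis unfolding a b using Suc by simp
  qed
  show ?thesis unfolding e fps_eq_iff
  proof
    fix n show "fps_nth (EE (Suc (Suc k)) - fps_X * EE (Suc (Suc k))) n = fps_nth (FF (Suc k)) n"
      unfolding fps_sub_nth fps_X_mult_nth EE_def FF_def fps_nth_Abs_fps
      using H[of n] by (cases n) simp_all
  qed
qed

lemma item8: assumes "k \<ge> 2"
  shows "Abs_fps (\<lambda>m. real (nsq (2*m) k)) =
           fps_X ^ (2 ^ (k - 2)) / ((1 - fps_X) * (\<Prod>j<k - 1. (1 - fps_X ^ (2 ^ j))))"
proof -
  obtain k' where k: "k = Suc (Suc k')" using assms by (metis add_2_eq_Suc le_Suc_ex)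
  have nz: "(1 - fps_X) * PP (Suc k') \<noteq> (0 :: real fps)"
  proof -
    have "fps_nth ((1 - fps_X) * PP (Suc k')) 0 = (1::real)" using PP0[of "Suc k'"] by simp
    then show ?thesis by auto
  qed
  have "EE k * ((1 - fps_X) * PP (Suc k')) = ((1 - fps_X) * EE k) * PP (Suc k')" by (simp only: mult_ac)
  also have "\<dots> = FF (Suc k') * PP (Suc k')" using EE_rec[of k'] k by simp
  also have "\<dots> = fps_X ^ (2^k')" by (rule FF_PP)
  finally have "EE k * ((1 - fps_X) * PP (Suc k')) = fps_X ^ (2^k')" .
  moreover have "EE k = (EE k * ((1 - fps_X) * PP (Suc k'))) / ((1 - fps_X) * PP (Suc k'))"
    using nz by simp
  ultimately have "EE k = fps_X ^ (2^k') / ((1 - fps_X) * PP (Suc k'))" by simp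
  then show ?thesis using k unfolding EE_def PP_def by simp
qed



definition QQ :: "nat \<Rightarrow> nat \<Rightarrow> bool" where "QQ k p = (\<exists>j<k. p = 2^j)"
definition BB :: "nat \<Rightarrow> real fps" where
  "BB k = Abs_fps (\<lambda>n. real (card (partitions_with (QQ k) n)))"

lemma sorted_le_last: "sorted ps \<Longrightarrow> x \<in> set ps \<Longrightarrow> x \<le> last ps"
proof (induction ps)
  case Nil then show ?case by simp
next
  case (Cons a ps)
  show ?case
  proof (cases "ps = []")
    case True then show ?thesis using Cons by simp
  next
    case False
    have l: "last (a # ps) = last ps" using False by simp
    have "last ps \<in> set ps" using False by simp
    then have "a \<le> last ps" using Cons.prems(1) by simp
    moreover have "x = a \<or> x \<in> set ps" using Cons.prems(2) by simp
    ultimately show ?thesis using Cons l by auto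
  qed
qed

lemma snoc_set:
  assumes "1 \<le> v" "P v"
  shows "{ps \<in> partitions_with P n. ps \<noteq> [] \<and> last ps = v} =
         (if v \<le> n then (\<lambda>qs. qs @ [v]) ` partitions_with (\<lambda>p. P p \<and> p \<le> v) (n - v) else {})"
proof -
  have sub: "{ps \<in> partitions_with P n. ps \<noteq> [] \<and> last ps = v} \<subseteq>
         (\<lambda>qs. qs @ [v]) ` partitions_with (\<lambda>p. P p \<and> p \<le> v) (n - v) \<and> (ps \<in> {ps \<in> partitions_with P n. ps \<noteq> [] \<and> last ps = v} \<longrightarrow> v \<le> n)" for ps
  proof -
    have A: "ps \<in> (\<lambda>qs. qs @ [v]) ` partitions_with (\<lambda>p. P p \<and> p \<le> v) (n - v) \<and> v \<le> n"
      if ps: "ps \<in> partitions_with P n" "ps \<noteq> []" "last ps = v" for ps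
    proof -
      obtain qs where e: "ps = qs @ [v]" using ps by (metis append_butlast_last_id)
      have s: "sorted (qs @ [v])" "sum_list qs + v = n" "\<forall>p\<in>set qs. 1 \<le> p \<and> P p"
        using ps(1) e by (auto simp: partitions_with_def)
      have "qs \<in> partitions_with (\<lambda>p. P p \<and> p \<le> v) (n - v)"
        using s unfolding partitions_with_def by (auto simp: sorted_append)
      then show ?thesis using e s(2) by auto
    qed
    show ?thesis using A by blast
  qed
  have sup: "(\<lambda>qs. qs @ [v]) ` partitions_with (\<lambda>p. P p \<and> p \<le> v) (n - v) \<subseteq> {ps \<in> partitions_with P n. ps \<noteq> [] \<and> last ps = v}"
    if "v \<le> n"
    using that assms unfolding partitions_with_def by (auto simp: sorted_append)
  show ?thesis using sub sup by auto
qed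

lemma card_snoc:
  assumes "1 \<le> v" "P v"
  shows "card {ps \<in> partitions_with P n. ps \<noteq> [] \<and> last ps = v} =
         (if v \<le> n then card (partitions_with (\<lambda>p. P p \<and> p \<le> v) (n - v)) else 0)"
proof -
  have "inj_on (\<lambda>qs. qs @ [v]) A" for A :: "nat list set" by (auto simp: inj_on_def)
  then show ?thesis unfolding snoc_set[of v P n, OF assms] by (simp add: card_image)
qed

lemma QQ_Suc_le: "(\<lambda>p. QQ (Suc k) p \<and> p \<le> 2^k) = QQ (Suc k)"
proof (rule ext)
  fix p
  show "(QQ (Suc k) p \<and> p \<le> 2^k) = QQ (Suc k) p"
  proof
    assume "QQ (Suc k) p"
    then obtain j where "j < Suc k" "p = 2^j" unfolding QQ_def by blast
    then have "p \<le> 2^k" by (simp add: power_increasing)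
    then show "QQ (Suc k) p \<and> p \<le> 2^k" using \<open>QQ (Suc k) p\<close> by simp
  qed simp
qed

lemma pw_Suc_split:
  "partitions_with (QQ (Suc k)) n = partitions_with (QQ k) n \<union>
     {ps \<in> partitions_with (QQ (Suc k)) n. ps \<noteq> [] \<and> last ps = 2^k}"
proof
  show "partitions_with (QQ (Suc k)) n \<subseteq> partitions_with (QQ k) n \<union>
     {ps \<in> partitions_with (QQ (Suc k)) n. ps \<noteq> [] \<and> last ps = 2^k}"
  proof
    fix ps assume ps: "ps \<in> partitions_with (QQ (Suc k)) n"
    show "ps \<in> partitions_with (QQ k) n \<union> {ps \<in> partitions_with (QQ (Suc k)) n. ps \<noteq> [] \<and> last ps = 2^k}"
    proof (cases "ps \<noteq> [] \<and> last ps = 2^k")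
      case True then show ?thesis using ps by simp
    next
      case False
      have "QQ k p" if p: "p \<in> set ps" for p
      proof -
        obtain j where j: "j < Suc k" "p = 2^j" using ps p by (auto simp: partitions_with_def QQ_def)
        show ?thesis
        proof (cases "j = k")
          case False then show ?thesis using j by (auto simp: QQ_def)
        next
          case True
          have ne: "ps \<noteq> []" using p by auto
          have "last ps \<in> set ps" using ne by simp
          then obtain i where i: "i < Suc k" "last ps = 2^i" using ps by (auto simp: partitions_with_def QQ_def)
          have "2^k \<le> last ps" using sorted_le_last[of ps p] ps p j True by (simp add: partitions_with_def)
          then have "2^k \<le> (2::nat)^i" using i by simp
          then have "k \<le> i" by simp
          then have "i = k" using i by simp
          then show ?thesis using False ne i by simp
        qed
      qed
      then show ?thesis using ps by (auto simp: partitions_with_def)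
    qed
  qed
next
  show "partitions_with (QQ k) n \<union> {ps \<in> partitions_with (QQ (Suc k)) n. ps \<noteq> [] \<and> last ps = 2^k}
      \<subseteq> partitions_with (QQ (Suc k)) n"
    by (auto simp: partitions_with_def QQ_def less_Suc_eq)
qed

lemma pw_disj: "partitions_with (QQ k) n \<inter> {ps \<in> partitions_with (QQ (Suc k)) n. ps \<noteq> [] \<and> last ps = 2^k} = {}"
proof -
  have False if "ps \<in> partitions_with (QQ k) n" "ps \<noteq> []" "last ps = 2^k" for ps
  proof -
    have "last ps \<in> set ps" using that(2) by (rule last_in_set)
    then have "QQ k (last ps)" using that(1) unfolding partitions_with_def by blast
    then show False using that(3) unfolding QQ_def by simp
  qed
  then show ?thesis by blast
qed

lemma bcount_rec:
  "card (partitions_with (QQ (Suc k)) n) = card (partitions_with (QQ k) n) +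
     (if 2^k \<le> n then card (partitions_with (QQ (Suc k)) (n - 2^k)) else 0)"
proof -
  have "card (partitions_with (QQ (Suc k)) n) = card (partitions_with (QQ k) n) +
     card {ps \<in> partitions_with (QQ (Suc k)) n. ps \<noteq> [] \<and> last ps = 2^k}"
  proof -
    have f1: "finite {ps \<in> partitions_with (QQ (Suc k)) n. ps \<noteq> [] \<and> last ps = 2^k}"
      by (rule finite_subset[OF _ finite_pw[of "QQ (Suc k)" n]]) blast
    have "card (partitions_with (QQ (Suc k)) n) = card (partitions_with (QQ k) n \<union>
     {ps \<in> partitions_with (QQ (Suc k)) n. ps \<noteq> [] \<and> last ps = 2^k})"
      by (rule arg_cong[where f=card, OF pw_Suc_split])
    also have "\<dots> = card (partitions_with (QQ k) n) + card {ps \<in> partitions_with (QQ (Suc k)) n. ps \<noteq> [] \<and> last ps = 2^k}"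
      by (rule card_Un_disjoint[OF finite_pw f1 pw_disj])
    finally show ?thesis .
  qed
  also have "card {ps \<in> partitions_with (QQ (Suc k)) n. ps \<noteq> [] \<and> last ps = 2^k} =
     (if 2^k \<le> n then card (partitions_with (QQ (Suc k)) (n - 2^k)) else 0)"
  proof -
    have q: "QQ (Suc k) (2^k)" unfolding QQ_def by blast
    have "card {ps \<in> partitions_with (QQ (Suc k)) n. ps \<noteq> [] \<and> last ps = 2^k} =
     (if 2^k \<le> n then card (partitions_with (\<lambda>p. QQ (Suc k) p \<and> p \<le> 2^k) (n - 2^k)) else 0)"
      by (rule card_snoc[of "2^k" "QQ (Suc k)" n, OF _ q]) simp
    then show ?thesis by (simp only: QQ_Suc_le)
  qed
  finally show ?thesis .
qed

lemma BB_PP: "BB k * PP k = 1"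
proof (induction k)
  case 0
  have m: "ps \<in> partitions_with (QQ 0) n \<longleftrightarrow> ps = [] \<and> n = 0" for ps n
    by (cases ps) (auto simp: partitions_with_def QQ_def)
  have "partitions_with (QQ 0) n = (if n = 0 then {[]} else {})" for n
    using m[of _ n] by auto
  then have "BB 0 = 1" by (auto simp: BB_def fps_eq_iff)
  then show ?case by (simp add: PP_def)
next
  case (Suc k)
  have e: "BB (Suc k) * (1 - fps_X^(2^k)) = BB (Suc k) - fps_X^(2^k) * BB (Suc k)"
    by (simp add: algebra_simps)
  have r: "BB (Suc k) * (1 - fps_X^(2^k)) = BB k"
    unfolding e fps_eq_iff
  proof
    fix n show "fps_nth (BB (Suc k) - fps_X^(2^k) * BB (Suc k)) n = fps_nth (BB k) n"
      unfolding fps_sub_nth fps_X_power_mult_nth BB_def fps_nth_Abs_fps bcount_rec[of k n]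
      by auto
  qed
  have "BB (Suc k) * PP (Suc k) = (BB (Suc k) * (1 - fps_X^(2^k))) * PP k"
    by (simp add: PP_def mult_ac)
  then show ?case using Suc.IH r by simp
qed

lemma item9: assumes "k \<ge> 1"
  shows "nsq n k = (if n < 2 ^ (k - 1) then 0
                      else card (partitions_with (\<lambda>p. \<exists>j\<le>k - 1. p = 2 ^ j) (n - 2 ^ (k - 1))))"
proof -
  obtain k' where k: "k = Suc k'" using assms by (cases k) auto
  have Q: "(\<lambda>p. \<exists>j\<le>k - 1. p = 2 ^ j) = QQ k" using k by (auto simp: QQ_def fun_eq_iff)
  have "FF k = FF k * (PP k * BB k)" using BB_PP[of k] by (simp add: mult_ac)
  also have "\<dots> = (FF k * PP k) * BB k" by (simp add: mult_ac)
  also have "\<dots> = fps_X^(2^(k-1)) * BB k" using FF_PP[of k'] k by simp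
  finally have "fps_nth (FF k) n = fps_nth (fps_X^(2^(k-1)) * BB k) n" by simp
  then have "real (nsq n k) = (if n < 2^(k-1) then 0 else real (card (partitions_with (QQ k) (n - 2^(k-1)))))"
    unfolding fps_X_power_mult_nth FF_def BB_def fps_nth_Abs_fps .
  then show ?thesis unfolding Q by (simp split: if_splits)
qed

lemma item10: assumes "k \<ge> 1"
  shows "nsq n k = card {ps \<in> partitions_with (\<lambda>p. \<exists>j. p = 2 ^ j) n.
                             ps \<noteq> [] \<and> last ps = 2 ^ (k - 1)}"
proof -
  have Q: "(\<lambda>p. (\<exists>j. p = 2 ^ j) \<and> p \<le> 2^(k-1)) = (\<lambda>p. \<exists>j\<le>k - 1. p = (2::nat) ^ j)"
    by (auto simp: fun_eq_iff)
  have c: "card {ps \<in> partitions_with (\<lambda>p. \<exists>j. p = 2 ^ j) n. ps \<noteq> [] \<and> last ps = 2 ^ (k - 1)} =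
    (if 2^(k-1) \<le> n then card (partitions_with (\<lambda>p. (\<exists>j. p = 2 ^ j) \<and> p \<le> 2^(k-1)) (n - 2^(k-1))) else 0)"
    by (rule card_snoc[of "2^(k-1)" "\<lambda>p. \<exists>j. p = 2 ^ j" n]) auto
  have c2: "card {ps \<in> partitions_with (\<lambda>p. \<exists>j. p = 2 ^ j) n. ps \<noteq> [] \<and> last ps = 2 ^ (k - 1)} =
    (if 2^(k-1) \<le> n then card (partitions_with (\<lambda>p. \<exists>j\<le>k - 1. p = (2::nat) ^ j) (n - 2^(k-1))) else 0)"
    using c unfolding Q .
  show ?thesis unfolding item9[OF assms] c2 by simp
qed

theorem theorem3:
  shows "nsq 0 0 = 1
    \<and> (\<forall>n\<ge>1. nsq n 0 = 0)
    \<and> (\<forall>n k. k > n \<longrightarrow> nsq n k = 0)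
    \<and> (\<forall>n\<ge>1. nsq n 1 = 1)
    \<and> (\<forall>m\<ge>1. \<forall>k\<ge>1. nsq (2*m) k = nsq (2*m - 1) k + nsq m (k - 1))
    \<and> (\<forall>m\<ge>1. \<forall>k\<ge>1. nsq (2*m + 1) k = nsq (2*m) k)
    \<and> (\<forall>k\<ge>1.
           Abs_fps (\<lambda>m. real (nsq m k)) =
           fps_X ^ (2 ^ (k - 1)) / (\<Prod>j<k. (1 - fps_X ^ (2 ^ j))))
    \<and> (\<forall>k\<ge>2.
           Abs_fps (\<lambda>m. real (nsq (2*m) k)) =
           fps_X ^ (2 ^ (k - 2)) / ((1 - fps_X) * (\<Prod>j<k - 1. (1 - fps_X ^ (2 ^ j)))))
    \<and> (\<forall>n. \<forall>k\<ge>1.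
           nsq n k = (if n < 2 ^ (k - 1) then 0
                      else card (partitions_with (\<lambda>p. \<exists>j\<le>k - 1. p = 2 ^ j) (n - 2 ^ (k - 1)))))
    \<and> (\<forall>n. \<forall>k\<ge>1.
           nsq n k = card {ps \<in> partitions_with (\<lambda>p. \<exists>j. p = 2 ^ j) n.
                             ps \<noteq> [] \<and> last ps = 2 ^ (k - 1)})"
proof -
  have f1: "nsq 0 0 = 1" by (simp add: nsq0)
  have f2: "\<forall>n\<ge>1. nsq n 0 = 0" by (simp add: nsq0)
  have f3: "\<forall>n k. k > n \<longrightarrow> nsq n k = 0" using nsq_big by blast
  have f4: "\<forall>n\<ge>1. nsq n 1 = 1"
  proof (intro allI impI)
    fix n :: nat assume "n \<ge> 1"
    then have "n \<noteq> 0" by simp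
    then show "nsq n 1 = 1" using nsq1[of n] by simp
  qed
  have f5: "\<forall>m\<ge>1. \<forall>k\<ge>1. nsq (2*m) k = nsq (2*m - 1) k + nsq m (k - 1)" using item5 by blast
  have f6: "\<forall>m\<ge>1. \<forall>k\<ge>1. nsq (2*m + 1) k = nsq (2*m) k" using item6 by blast
  have f7: "\<forall>k\<ge>1.
           Abs_fps (\<lambda>m. real (nsq m k)) =
           fps_X ^ (2 ^ (k - 1)) / (\<Prod>j<k. (1 - fps_X ^ (2 ^ j)))"
    using item7 by blast
  have f8: "\<forall>k\<ge>2.
           Abs_fps (\<lambda>m. real (nsq (2*m) k)) =
           fps_X ^ (2 ^ (k - 2)) / ((1 - fps_X) * (\<Prod>j<k - 1. (1 - fps_X ^ (2 ^ j))))"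
    using item8 by blast
  have f9: "\<forall>n. \<forall>k\<ge>1.
           nsq n k = (if n < 2 ^ (k - 1) then 0
                      else card (partitions_with (\<lambda>p. \<exists>j\<le>k - 1. p = 2 ^ j) (n - 2 ^ (k - 1))))"
    using item9 by blast
  have f10: "\<forall>n. \<forall>k\<ge>1.
           nsq n k = card {ps \<in> partitions_with (\<lambda>p. \<exists>j. p = 2 ^ j) n.
                             ps \<noteq> [] \<and> last ps = 2 ^ (k - 1)}"
    using item10 by blast
  show ?thesis
    apply (intro conjI)
    apply (rule f1)
    apply (rule f2)
    apply (rule f3)
    apply (rule f4)
    apply (rule f5)
    apply (rule f6)
    apply (rule f7)
    apply (rule f8)
    apply (rule f9)
    apply (rule f10)
    done
qed

end
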